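(* Let $s'\in\mathbb C$ and $f\in C_c^{\mathrm{lc}}(S\mathfrak X)$, regarded as a function on $G/M$ via $gM\mapsto f(go,g\omega_+)$. Then for every $n\in\mathbb N_0$ and $g\in G$, $$\mathcal I_{s',n}(f)(g)=\sum_{\substack{x\in H_{\omega_+}(o)\\ d(x,o)\le 2n}}f(gx,g\omega_+)\,q^{-d(x,o)(\frac12-i\overline{s'})}.$$ In particular $\mathcal I_{s',0}(f)=f$.
   Context: Let $q\ge2$, $\mathfrak G$ the $(q+1)$-regular tree with vertex set $\mathfrak X$, graph distance $d$ and boundary $\Omega$ (infinite non-backtracking edge chains modulo eventual equality up to shift); $[x,\omega)$ is the ray from $x$ to $\omega$. Fix a vertex $o$ and $\omega_-\ne\omega_+$ with $o$ on the geodesic $]\omega_-,\omega_+[$; $\langle x,\omega\rangle=d(o,y)-d(x,y)$ where $[o,\omega)\cap[x,\omega)=[y,\omega)$. $H_{\omega_+}(o)=\{x\in\mathfrak X:\langle x,\omega_+\rangle=0\}$. $S\mathfrak X=\mathfrak X\times\Omega$, $C_c^{\mathrm{lc}}(S\mathfrak X)$ its locally constant compactly supported functions. $G=\mathrm{Aut}(\mathfrak G)$, $K=\mathrm{Stab}_G(o)$, $M=\{\gamma\in K:\gamma$ fixes $]\omega_-,\omega_+[$ pointwise$\}$, $B_{\omega_+}=\{g\in G:g\omega_+=\omega_+,\ g\text{ fixes some vertex}\}$, a unimodular locally compact group whose Haar measure $du$ is normalized so that $B_{\omega_+}\cap\mathrm{Stab}_G(x)$ has measure $q^{\langle x,\omega_+\rangle}$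 for each $x\in\mathfrak X$. For $n\in\mathbb N_0$ let $x_n$ be the vertex of $[o,\omega_+)$ with $d(o,x_n)=n$ and $B_{\omega_+,n}=B_{\omega_+}\cap\mathrm{Stab}_G(x_n)$. For functions $F$ on $G/M$, $\mathcal I_{s',n}(F)(gM)=\int_{B_{\omega_+,n}}F(guM)\,q^{\langle uo,\omega_-\rangle(\frac12-i\overline{s'})}\,du$. *)

theory Defs
  imports "HOL-Analysis.Analysis"
begin

definition walk :: "('v \<Rightarrow> 'v \<Rightarrow> bool) \<Rightarrow> nat \<Rightarrow> 'v \<Rightarrow> 'v \<Rightarrow> bool" where
  "walk adj n x y \<longleftrightarrow> (\<exists>p. p 0 = x \<and> p n = y \<and> (\<forall>i<n. adj (p i) (p (Suc i))))"

definition gdist :: "('v \<Rightarrow> 'v \<Rightarrow> bool) \<Rightarrow> 'v \<Rightarrow> 'v \<Rightarrow> nat" where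
  "gdist adj x y = (LEAST n. walk adj n x y)"

definition regular_tree :: "nat \<Rightarrow> ('v \<Rightarrow> 'v \<Rightarrow> bool) \<Rightarrow> bool" where
  "regular_tree q adj \<longleftrightarrow>
     (\<forall>x y. adj x y \<longrightarrow> adj y x) \<and> (\<forall>x. \<not> adj x x) \<and>
     (\<forall>x y. \<exists>n. walk adj n x y) \<and>
     (\<forall>n p. 0 < n \<and> p 0 = p n \<and> (\<forall>i<n. adj (p i) (p (Suc i)))
             \<longrightarrow> (\<exists>i. i + 2 \<le> n \<and> p (i + 2) = p i)) \<and>
     (\<forall>x. finite {y. adj x y} \<and> card {y. adj x y} = q + 1)"

definition is_ray :: "('v \<Rightarrow> 'v \<Rightarrow> bool) \<Rightarrow> (nat \<Rightarrow> 'v) \<Rightarrow> bool" where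
  "is_ray adj r \<longleftrightarrow> (\<forall>n. adj (r n) (r (Suc n))) \<and> (\<forall>n. r (Suc (Suc n)) \<noteq> r n)"

definition ray_rel :: "('v \<Rightarrow> 'v \<Rightarrow> bool) \<Rightarrow> ((nat \<Rightarrow> 'v) \<times> (nat \<Rightarrow> 'v)) set" where
  "ray_rel adj = {(r, r'). is_ray adj r \<and> is_ray adj r' \<and> (\<exists>k m. \<forall>n. r (n + k) = r' (n + m))}"

definition boundary :: "('v \<Rightarrow> 'v \<Rightarrow> bool) \<Rightarrow> (nat \<Rightarrow> 'v) set set" where
  "boundary adj = Collect (is_ray adj) // ray_rel adj"

definition ray_from :: "'v \<Rightarrow> (nat \<Rightarrow> 'v) set \<Rightarrow> (nat \<Rightarrow> 'v)" where
  "ray_from x \<omega> = (THE r. r \<in> \<omega> \<and> r 0 = x)"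

text \<open>Busemann function \<langle>x,\<omega>\<rangle> = d(o0,y) - d(x,y), where [o0,\<omega>)\<inter>[x,\<omega>) = [y,\<omega>),
  i.e. y is the first vertex of [x,\<omega>) lying on [o0,\<omega>).\<close>
definition busemann :: "('v \<Rightarrow> 'v \<Rightarrow> bool) \<Rightarrow> 'v \<Rightarrow> 'v \<Rightarrow> (nat \<Rightarrow> 'v) set \<Rightarrow> int" where
  "busemann adj o0 x \<omega> =
     (let r = ray_from o0 \<omega>; r' = ray_from x \<omega>;
          y = r' (LEAST k. r' k \<in> range r)
      in int (gdist adj o0 y) - int (gdist adj x y))"

definition horosphere :: "('v \<Rightarrow> 'v \<Rightarrow> bool) \<Rightarrow> 'v \<Rightarrow> (nat \<Rightarrow> 'v) set \<Rightarrow> 'v set" where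
  "horosphere adj o0 \<omega> = {x. busemann adj o0 x \<omega> = 0}"

definition automs :: "('v \<Rightarrow> 'v \<Rightarrow> bool) \<Rightarrow> ('v \<Rightarrow> 'v) set" where
  "automs adj = {g. bij g \<and> (\<forall>x y. adj (g x) (g y) \<longleftrightarrow> adj x y)}"

definition bact :: "('v \<Rightarrow> 'v) \<Rightarrow> (nat \<Rightarrow> 'v) set \<Rightarrow> (nat \<Rightarrow> 'v) set" where
  "bact g \<omega> = (\<lambda>r. g \<circ> r) ` \<omega>"

definition stab :: "('v \<Rightarrow> 'v \<Rightarrow> bool) \<Rightarrow> 'v \<Rightarrow> ('v \<Rightarrow> 'v) set" where
  "stab adj x = {g \<in> automs adj. g x = x}"

definition Bgrp :: "('v \<Rightarrow> 'v \<Rightarrow> bool) \<Rightarrow> (nat \<Rightarrow> 'v) set \<Rightarrow> ('v \<Rightarrow> 'v) set" where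
  "Bgrp adj \<omega> = {g \<in> automs adj. bact g \<omega> = \<omega> \<and> (\<exists>x. g x = x)}"

definition Bgrp_n :: "('v \<Rightarrow> 'v \<Rightarrow> bool) \<Rightarrow> 'v \<Rightarrow> (nat \<Rightarrow> 'v) set \<Rightarrow> nat \<Rightarrow> ('v \<Rightarrow> 'v) set" where
  "Bgrp_n adj o0 \<omega> n = Bgrp adj \<omega> \<inter> stab adj (ray_from o0 \<omega> n)"

definition Btop :: "('v \<Rightarrow> 'v \<Rightarrow> bool) \<Rightarrow> (nat \<Rightarrow> 'v) set \<Rightarrow> ('v \<Rightarrow> 'v) topology" where
  "Btop adj \<omega> = subtopology (product_topology (\<lambda>_. discrete_topology UNIV) UNIV) (Bgrp adj \<omega>)"

definition borel_of_top :: "'a topology \<Rightarrow> 'a measure" where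
  "borel_of_top T = sigma (topspace T) {U. openin T U}"

definition normalized_haar ::
  "nat \<Rightarrow> ('v \<Rightarrow> 'v \<Rightarrow> bool) \<Rightarrow> 'v \<Rightarrow> (nat \<Rightarrow> 'v) set \<Rightarrow> ('v \<Rightarrow> 'v) measure \<Rightarrow> bool" where
  "normalized_haar q adj o0 \<omega> \<mu> \<longleftrightarrow>
     space \<mu> = Bgrp adj \<omega> \<and>
     sets \<mu> = sets (borel_of_top (Btop adj \<omega>)) \<and>
     (\<forall>g \<in> Bgrp adj \<omega>. \<forall>A \<in> sets \<mu>. emeasure \<mu> ((\<lambda>u. g \<circ> u) ` A) = emeasure \<mu> A) \<and>
     (\<forall>x. emeasure \<mu> (Bgrp adj \<omega> \<inter> stab adj x)
            = ennreal (real q powr real_of_int (busemann adj o0 x \<omega>)))"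

text \<open>The topology on \<Omega> is the cone topology; basic neighbourhoods of \<omega> are
  the sets of \<omega>' whose ray from o0 agrees with [o0,\<omega>) up to step N.  X is discrete
  and \<Omega> compact, so compact support means support over finitely many vertices.\<close>
definition lc_cc :: "('v \<Rightarrow> 'v \<Rightarrow> bool) \<Rightarrow> 'v \<Rightarrow> ('v \<times> (nat \<Rightarrow> 'v) set \<Rightarrow> complex) \<Rightarrow> bool" where
  "lc_cc adj o0 f \<longleftrightarrow>
     (\<exists>F. finite F \<and> (\<forall>x. \<forall>\<omega>\<in>boundary adj. f (x, \<omega>) \<noteq> 0 \<longrightarrow> x \<in> F)) \<and>
     (\<forall>x. \<forall>\<omega>\<in>boundary adj. \<exists>N. \<forall>\<omega>'\<in>boundary adj.
         ray_from o0 \<omega>' N = ray_from o0 \<omega> N \<longrightarrow> f (x, \<omega>') = f (x, \<omega>))"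

text \<open>For f on SX regarded as function on G/M via gM \<mapsto> f(go, g\<omega>+):
  I_{s',n}(f)(g) = \<integral>_{B_{\<omega>+,n}} f(guo, gu\<omega>+) q^{\<langle>uo,\<omega>-\<rangle>(1/2 - i conj s')} du.\<close>
definition I_op ::
  "nat \<Rightarrow> ('v \<Rightarrow> 'v \<Rightarrow> bool) \<Rightarrow> 'v \<Rightarrow> (nat \<Rightarrow> 'v) set \<Rightarrow> (nat \<Rightarrow> 'v) set \<Rightarrow>
   ('v \<Rightarrow> 'v) measure \<Rightarrow> complex \<Rightarrow> nat \<Rightarrow> ('v \<times> (nat \<Rightarrow> 'v) set \<Rightarrow> complex) \<Rightarrow>
   ('v \<Rightarrow> 'v) \<Rightarrow> complex" where
  "I_op q adj o0 \<omega>m \<omega>p \<mu> s' n f g =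
     (LINT u : Bgrp_n adj o0 \<omega>p n | \<mu>.
        f ((g \<circ> u) o0, bact (g \<circ> u) \<omega>p) *
        of_nat q powr (of_int (busemann adj o0 (u o0) \<omega>m) * (1/2 - \<i> * cnj s')))"

end

theory Submission
  imports Defs
begin


definition nbw :: "('v \<Rightarrow> 'v \<Rightarrow> bool) \<Rightarrow> (nat \<Rightarrow> 'v) \<Rightarrow> nat \<Rightarrow> bool" where
  "nbw adj p n \<longleftrightarrow> (\<forall>i<n. adj (p i) (p (Suc i))) \<and> (\<forall>i. i + 2 \<le> n \<longrightarrow> p (i + 2) \<noteq> p i)"

definition eqv :: "(nat \<Rightarrow> 'v) \<Rightarrow> (nat \<Rightarrow> 'v) \<Rightarrow> bool" where
  "eqv r r' \<longleftrightarrow> (\<exists>k m. \<forall>n. r (n + k) = r' (n + m))"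

lemma eqv_refl: "eqv r r" unfolding eqv_def by blast
lemma eqv_sym: "eqv r r' \<Longrightarrow> eqv r' r" unfolding eqv_def by metis
lemma eqv_trans: assumes "eqv r r'" "eqv r' r''" shows "eqv r r''"
proof -
  obtain k m where 1: "\<forall>n. r (n + k) = r' (n + m)" using assms unfolding eqv_def by blast
  obtain k' m' where 2: "\<forall>n. r' (n + k') = r'' (n + m')" using assms unfolding eqv_def by blast
  have "r (n + (k + k')) = r'' (n + (m + m'))" for n
    using 1[rule_format, of "n + k'"] 2[rule_format, of "n + m"] by (simp add: ac_simps)
  then show ?thesis unfolding eqv_def by blast
qed

lemma bnd_mem: assumes "\<omega> \<in> boundary adj"
  shows "\<exists>r0. is_ray adj r0 \<and> \<omega> = {r. is_ray adj r \<and> eqv r0 r}"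
  using assms unfolding boundary_def quotient_def ray_rel_def eqv_def by auto

definition Dset :: "('v \<Rightarrow> 'v \<Rightarrow> bool) \<Rightarrow> 'v \<Rightarrow> 'v \<Rightarrow> nat \<Rightarrow> 'v set" where
  "Dset adj v w m = {p m | p. p 0 = v \<and> nbw adj p m \<and> (0 < m \<longrightarrow> p 1 \<noteq> w)}"

lemma is_ray_iff: "is_ray adj r \<longleftrightarrow> (\<forall>n. nbw adj r n)"
  unfolding is_ray_def nbw_def
  by (metis add_2_eq_Suc' le_add2 lessI)

lemma nbw_join:
  assumes "nbw adj p a" "nbw adj p2 b" "p a = p2 0" "0 < a \<and> 0 < b \<longrightarrow> p (a - 1) \<noteq> p2 1"
  shows "nbw adj (\<lambda>i. if i < a then p i else p2 (i - a)) (a + b)"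
  unfolding nbw_def
proof (intro conjI allI impI)
  fix i assume i: "i < a + b"
  show "adj (if i < a then p i else p2 (i - a)) (if Suc i < a then p (Suc i) else p2 (Suc i - a))"
  proof (cases "Suc i < a")
    case True then show ?thesis using assms(1) unfolding nbw_def by auto
  next
    case False
    show ?thesis
    proof (cases "i < a")
      case True
      then have "Suc i = a" using False by simp
      then show ?thesis using assms(1,3) True unfolding nbw_def by auto
    next
      case False
      then have "i - a < b" "Suc (i - a) = Suc i - a" using i by auto
      then show ?thesis using assms(2) False \<open>\<not> Suc i < a\<close> unfolding nbw_def by metis
    qed
  qed
next
  fix i assume i: "i + 2 \<le> a + b"
  consider "i + 2 < a" | "i + 2 = a" | "i + 1 = a" | "a \<le> i" by linarith
  then show "(if i + 2 < a then p (i + 2) else p2 (i + 2 - a)) \<noteq> (if i < a then p i else p2 (i - a))"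
  proof cases
    case 1 then show ?thesis using assms(1) unfolding nbw_def by auto
  next
    case 2 then show ?thesis using assms(1,3) unfolding nbw_def by auto
  next
    case 3
    then have "0 < a" "0 < b" "a - 1 = i" "i + 2 - a = 1" using i by auto
    then show ?thesis using assms(4) 3 by auto
  next
    case 4
    then have "(i - a) + 2 \<le> b" "i + 2 - a = (i - a) + 2" using i by auto
    then show ?thesis using assms(2) 4 unfolding nbw_def by auto
  qed
qed

lemma nbw_rev: assumes "nbw adj p n" "\<And>x y. adj x y \<Longrightarrow> adj y x"
  shows "nbw adj (\<lambda>i. p (n - i)) n"
  unfolding nbw_def
proof (intro conjI allI impI)
  fix i assume "i < n"
  then have "adj (p (n - Suc i)) (p (Suc (n - Suc i)))" using assms(1) unfolding nbw_def by simp
  moreover have "Suc (n - Suc i) = n - i" using \<open>i < n\<close> by simp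
  ultimately show "adj (p (n - i)) (p (n - Suc i))" using assms(2) by metis
next
  fix i assume "i + 2 \<le> n"
  then have "p ((n - (i + 2)) + 2) \<noteq> p (n - (i + 2))" using assms(1) unfolding nbw_def by simp
  moreover have "(n - (i + 2)) + 2 = n - i" using \<open>i + 2 \<le> n\<close> by simp
  ultimately show "p (n - (i + 2)) \<noteq> p (n - i)" by metis
qed

locale rtree =
  fixes q :: nat and adj :: "'v \<Rightarrow> 'v \<Rightarrow> bool"
  assumes T: "regular_tree q adj"
begin

lemma sym: "adj x y \<Longrightarrow> adj y x" using T unfolding regular_tree_def by blast
lemma irr: "\<not> adj x x" using T unfolding regular_tree_def by blast
lemma conn: "\<exists>n. walk adj n x y" using T unfolding regular_tree_def by blast
lemma deg: "finite {y. adj x y}" "card {y. adj x y} = q + 1" using T unfolding regular_tree_def by blast+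

lemma nbw_closed: assumes "nbw adj p n" "p 0 = p n" shows "n = 0"
proof (rule ccontr)
  assume "n \<noteq> 0"
  then have "0 < n" by simp
  with assms T obtain i where "i + 2 \<le> n" "p (i+2) = p i"
    unfolding regular_tree_def nbw_def by blast
  with assms show False unfolding nbw_def by blast
qed

lemma nbw_mono: "nbw adj p n \<Longrightarrow> m \<le> n \<Longrightarrow> nbw adj p m"
  unfolding nbw_def by auto

lemma nbw_unique:
  assumes "nbw adj p n" "nbw adj p' m" "p 0 = p' 0" "p n = p' m"
  shows "n = m \<and> (\<forall>i\<le>n. p i = p' i)"
  using assms
proof (induction n arbitrary: m)
  case 0
  then have "m = 0" using nbw_closed[of p' m] by simp
  then show ?case using 0 by simp
next
  case (Suc n)
  show ?case
  proof (cases m)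
    case 0
    then show ?thesis using Suc.prems nbw_closed[of p "Suc n"] by simp
  next
    case (Suc m')
    show ?thesis
    proof (cases "p n = p' m'")
      case True
      have "n = m' \<and> (\<forall>i\<le>n. p i = p' i)"
        using Suc.IH[of m'] Suc.prems True nbw_mono \<open>m = Suc m'\<close> by simp
      then show ?thesis using Suc.prems \<open>m = Suc m'\<close> by (metis le_Suc_eq)
    next
      case False
      define N where "N = Suc n + Suc m'"
      define w where "w i = (if i \<le> Suc n then p i else p' (N - i))" for i
      have w0: "w 0 = w N" using Suc.prems unfolding w_def N_def by simp
      have wadj: "\<forall>i<N. adj (w i) (w (Suc i))"
      proof (intro allI impI)
        fix i assume "i < N"
        show "adj (w i) (w (Suc i))"
        proof (cases "i < Suc n")
          case True
          then show ?thesis using Suc.prems(1) unfolding w_def nbw_def by auto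
        next
          case False
          then have a: "N - Suc i < Suc m'" "Suc (N - Suc i) = N - i" using \<open>i < N\<close> unfolding N_def by auto
          have "adj (p' (N - Suc i)) (p' (N - i))"
            using Suc.prems(2) a \<open>m = Suc m'\<close> unfolding nbw_def by (metis)
          then have "adj (p' (N - i)) (p' (N - Suc i))" by (rule sym)
          moreover have "w i = p' (N - i)"
          proof (cases "i = Suc n")
            case True then show ?thesis using Suc.prems(4) \<open>m = Suc m'\<close> unfolding w_def N_def by simp
          next
            case False then show ?thesis using \<open>\<not> i < Suc n\<close> unfolding w_def by simp
          qed
          ultimately show ?thesis using False unfolding w_def by simp
        qed
      qed
      have wnb: "\<forall>i. i + 2 \<le> N \<longrightarrow> w (i + 2) \<noteq> w i"
      proof (intro allI impI)
        fix i assume i: "i + 2 \<le> N"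
        consider "i + 2 \<le> Suc n" | "i = n" | "Suc n \<le> i" by linarith
        then show "w (i + 2) \<noteq> w i"
        proof cases
          case 1 then show ?thesis using Suc.prems(1) unfolding w_def nbw_def by auto
        next
          case 2
          have "N - (n+2) = m'" unfolding N_def by simp
          then show ?thesis using 2 False unfolding w_def by (auto simp: N_def)
        next
          case 3
          have e1: "w i = p' (N - i)"
          proof (cases "i = Suc n")
            case True then show ?thesis using Suc.prems(4) \<open>m = Suc m'\<close> unfolding w_def N_def by simp
          next
            case False then show ?thesis using 3 unfolding w_def by simp
          qed
          have e2: "w (i+2) = p' (N - i - 2)" using 3 unfolding w_def by simp
          have "(N - i - 2) + 2 \<le> Suc m'" "(N - i - 2) + 2 = N - i" using 3 i unfolding N_def by auto
          then have "p' (N - i - 2 + 2) \<noteq> p' (N - i - 2)" using Suc.prems(2) \<open>m = Suc m'\<close> unfolding nbw_def by blast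
          then show ?thesis using e1 e2 \<open>(N - i - 2) + 2 = N - i\<close> by simp
        qed
      qed
      have "N = 0" using nbw_closed[of w N] wadj wnb w0 unfolding nbw_def by blast
      then show ?thesis unfolding N_def by simp
    qed
  qed
qed


lemma walk_gdist: "walk adj (gdist adj x y) x y"
  unfolding gdist_def by (rule LeastI_ex) (rule conn)

lemma gdist_le: "walk adj n x y \<Longrightarrow> gdist adj x y \<le> n"
  unfolding gdist_def by (rule Least_le)

lemma geodesic_nbw:
  assumes "p 0 = x" "p d = y" "\<forall>i<d. adj (p i) (p (Suc i))" "d = gdist adj x y"
  shows "nbw adj p d"
proof -
  have "p (i + 2) \<noteq> p i" if i: "i + 2 \<le> d" for i
  proof
    assume eq: "p (i + 2) = p i"
    define p' where "p' j = (if j \<le> i then p j else p (j + 2))" for j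
    have "walk adj (d - 2) x y" unfolding walk_def
    proof (intro exI[of _ p'] conjI allI impI)
      show "p' 0 = x" using assms unfolding p'_def by simp
      show "p' (d - 2) = y"
      proof (cases "d - 2 \<le> i")
        case True then have "i = d - 2" using i by simp
        then have "i + 2 = d" "d - 2 = i" using i by simp_all
        then show ?thesis using True assms(2) eq unfolding p'_def by simp
      next
        case False
        have "Suc (Suc (d - 2)) = d" using i by simp
        then show ?thesis using False assms(2) unfolding p'_def by simp
      qed
      fix j assume "j < d - 2"
      then show "adj (p' j) (p' (Suc j))" using assms(3) eq i unfolding p'_def
        by (cases "j < i"; cases "j = i") (auto, metis add_2_eq_Suc' less_diff_conv)
    qed
    then have "d \<le> d - 2" using gdist_le assms by metis
    then show False using i by simp
  qed
  then show ?thesis using assms unfolding nbw_def by blast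
qed

lemma geodesic_exists: "\<exists>p. p 0 = x \<and> p (gdist adj x y) = y \<and> nbw adj p (gdist adj x y)"
proof -
  obtain p where "p 0 = x" "p (gdist adj x y) = y" "\<forall>i<gdist adj x y. adj (p i) (p (Suc i))"
    using walk_gdist unfolding walk_def by blast
  then show ?thesis using geodesic_nbw by blast
qed

lemma nbw_gdist: assumes "nbw adj p n" shows "gdist adj (p 0) (p n) = n"
proof -
  obtain p' where "p' 0 = p 0" "p' (gdist adj (p 0) (p n)) = p n" "nbw adj p' (gdist adj (p 0) (p n))"
    using geodesic_exists by blast
  then show ?thesis using nbw_unique[OF assms] by metis
qed

lemma nbw_shift: "nbw adj p n \<Longrightarrow> k + m \<le> n \<Longrightarrow> nbw adj (\<lambda>i. p (i + k)) m"
  unfolding nbw_def by (auto simp: add.commute add.left_commute)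

lemma ray_nbw: "is_ray adj r \<Longrightarrow> nbw adj (\<lambda>i. r (i + k)) n"
  unfolding is_ray_def nbw_def by (metis add_2_eq_Suc' add_Suc)

lemma ray_nbw0: "is_ray adj r \<Longrightarrow> nbw adj r n"
  using ray_nbw[of r 0] by simp

lemma ray_inj: assumes "is_ray adj r" "r i = r j" shows "i = j"
proof -
  have *: "i = j" if "i \<le> j" "r i = r j" for i j
    using nbw_closed[OF ray_nbw[OF assms(1), of i "j - i"]] that by simp
  show ?thesis using *[of i j] *[of j i] assms by (metis nat_le_linear)
qed

lemma ray_dist: "is_ray adj r \<Longrightarrow> gdist adj (r k) (r (k + n)) = n"
  using nbw_gdist[OF ray_nbw[of r k n]] by (simp add: add.commute)

lemma aut_inj: "g \<in> automs adj \<Longrightarrow> inj g" unfolding automs_def bij_def by blast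

lemma aut_adj: "g \<in> automs adj \<Longrightarrow> adj (g x) (g y) \<longleftrightarrow> adj x y" unfolding automs_def by blast

lemma aut_nbw: assumes "g \<in> automs adj" "nbw adj p n" shows "nbw adj (g \<circ> p) n"
  using assms(2) aut_adj[OF assms(1)] injD[OF aut_inj[OF assms(1)]] unfolding nbw_def by (metis comp_apply)

lemma aut_ray: assumes "g \<in> automs adj" "is_ray adj r" shows "is_ray adj (g \<circ> r)"
  using assms(2) aut_adj[OF assms(1)] injD[OF aut_inj[OF assms(1)]] unfolding is_ray_def by (metis comp_apply)

lemma aut_gdist: assumes "g \<in> automs adj" shows "gdist adj (g x) (g y) = gdist adj x y"
proof -
  obtain p where "p 0 = x" "p (gdist adj x y) = y" "nbw adj p (gdist adj x y)"
    using geodesic_exists by blast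
  then show ?thesis using nbw_gdist[OF aut_nbw[OF assms]] by fastforce
qed


lemma class_iff: assumes "\<omega> \<in> boundary adj" "r \<in> \<omega>"
  shows "r' \<in> \<omega> \<longleftrightarrow> is_ray adj r' \<and> eqv r r'"
proof -
  obtain r0 where "is_ray adj r0" "\<omega> = {r. is_ray adj r \<and> eqv r0 r}" using bnd_mem[OF assms(1)] by blast
  then show ?thesis using assms(2) eqv_trans eqv_sym by blast
qed

lemma class_ray: "\<omega> \<in> boundary adj \<Longrightarrow> r \<in> \<omega> \<Longrightarrow> is_ray adj r"
  using class_iff by blast

lemma class_unique: assumes "\<omega> \<in> boundary adj" "r \<in> \<omega>" "r' \<in> \<omega>" "r 0 = r' 0"
  shows "r = r'"
proof
  fix i
  have rr: "is_ray adj r" "is_ray adj r'" using assms class_ray by blast+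
  obtain k m where km: "\<forall>n. r (n + k) = r' (n + m)" using class_iff[OF assms(1,2)] assms(3) unfolding eqv_def by blast
  have "k = m \<and> (\<forall>i\<le>k. r i = r' i)"
    using nbw_unique[OF ray_nbw0[OF rr(1)] ray_nbw0[OF rr(2)] assms(4)] km[rule_format, of 0] by simp
  then show "r i = r' i" using km[rule_format, of "i - k"] by (cases "i \<le> k") auto
qed

lemma class_exists: assumes "\<omega> \<in> boundary adj" shows "\<exists>r\<in>\<omega>. r 0 = x"
proof -
  obtain r0 where r0: "is_ray adj r0" "\<omega> = {r. is_ray adj r \<and> eqv r0 r}" using bnd_mem[OF assms(1)] by blast
  define dm where "dm = (LEAST d. \<exists>k. gdist adj x (r0 k) = d)"
  have "\<exists>k. gdist adj x (r0 k) = dm"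
    unfolding dm_def by (rule LeastI_ex[where P="\<lambda>d. \<exists>k. gdist adj x (r0 k) = d"]) auto
  then obtain k where k: "gdist adj x (r0 k) = dm" by blast
  have mn: "dm \<le> gdist adj x (r0 k')" for k' unfolding dm_def by (rule Least_le) blast
  obtain p where p: "p 0 = x" "p dm = r0 k" "nbw adj p dm" using geodesic_exists[of x "r0 k"] k by metis
  define r' where "r' i = (if i \<le> dm then p i else r0 (i - dm + k))" for i
  have r'adj: "adj (r' i) (r' (Suc i))" for i
  proof (cases "i < dm")
    case True then show ?thesis using p(3) unfolding r'_def nbw_def by auto
  next
    case False
    have "adj (r0 (i - dm + k)) (r0 (Suc (i - dm + k)))" using r0(1) unfolding is_ray_def by blast
    moreover have "r' i = r0 (i - dm + k)" using False p(2) unfolding r'_def by auto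
    moreover have "r' (Suc i) = r0 (Suc (i - dm + k))" using False unfolding r'_def by (simp add: Suc_diff_le)
    ultimately show ?thesis by simp
  qed
  have r'nb: "r' (Suc (Suc i)) \<noteq> r' i" for i
  proof -
    consider "i + 2 \<le> dm" | "Suc i = dm" | "dm \<le> i" by linarith
    then show ?thesis
    proof cases
      case 1 then show ?thesis using p(3) unfolding r'_def nbw_def by auto
    next
      case 2
      show ?thesis
      proof
        assume eq: "r' (Suc (Suc i)) = r' i"
        have "r' (Suc (Suc i)) = r0 (Suc k)" using 2 unfolding r'_def by auto
        then have "p i = r0 (Suc k)" using eq 2 unfolding r'_def by auto
        then have "walk adj i x (r0 (Suc k))" using p unfolding walk_def nbw_def using 2 by auto
        then have "dm \<le> i" using mn[of "Suc k"] gdist_le by (meson le_trans)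
        then show False using 2 by simp
      qed
    next
      case 3
      have "r' i = r0 (i - dm + k)" using 3 p(2) unfolding r'_def by auto
      moreover have "r' (Suc (Suc i)) = r0 (Suc (Suc (i - dm + k)))" using 3 unfolding r'_def by (simp add: Suc_diff_le)
      ultimately show ?thesis using r0(1) unfolding is_ray_def by metis
    qed
  qed
  have "is_ray adj r'" unfolding is_ray_def using r'adj r'nb by blast
  moreover have "eqv r0 r'" unfolding eqv_def
    by (rule exI[of _ k], rule exI[of _ dm]) (auto simp: r'_def p(2))
  moreover have "r' 0 = x" using p unfolding r'_def by simp
  ultimately show ?thesis using r0(2) by blast
qed

lemma ray_from_prop: assumes "\<omega> \<in> boundary adj"
  shows "ray_from x \<omega> \<in> \<omega>" "ray_from x \<omega> 0 = x"
proof -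
  have "\<exists>!r. r \<in> \<omega> \<and> r 0 = x" using class_exists[OF assms] class_unique[OF assms] by blast
  then have "ray_from x \<omega> \<in> \<omega> \<and> ray_from x \<omega> 0 = x" unfolding ray_from_def by (rule theI')
  then show "ray_from x \<omega> \<in> \<omega>" "ray_from x \<omega> 0 = x" by simp_all
qed

lemma ray_from_eq: "\<omega> \<in> boundary adj \<Longrightarrow> r \<in> \<omega> \<Longrightarrow> r 0 = x \<Longrightarrow> ray_from x \<omega> = r"
  using ray_from_prop class_unique by metis

lemma shift_in: assumes "\<omega> \<in> boundary adj" "r \<in> \<omega>" shows "(\<lambda>i. r (i + j)) \<in> \<omega>"
proof -
  have "is_ray adj r" using class_ray assms by blast
  then have "is_ray adj (\<lambda>i. r (i + j))" unfolding is_ray_def by simp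
  moreover have "eqv r (\<lambda>i. r (i + j))" unfolding eqv_def by (rule exI[of _ j], rule exI[of _ 0]) simp
  ultimately show ?thesis using class_iff[OF assms] by blast
qed

lemma bact_in: "r \<in> \<omega> \<Longrightarrow> g \<circ> r \<in> bact g \<omega>" unfolding bact_def by blast


lemma D_card: "adj v w \<Longrightarrow> finite (Dset adj v w m) \<and> card (Dset adj v w m) \<le> q ^ m"
proof (induction m arbitrary: v w)
  case 0
  have "Dset adj v w 0 = {v}" unfolding Dset_def nbw_def by auto
  then show ?case by simp
next
  case (Suc m)
  let ?N = "{c. adj v c} - {w}"
  have sub: "Dset adj v w (Suc m) \<subseteq> (\<Union>c\<in>?N. Dset adj c v m)"
  proof
    fix z assume "z \<in> Dset adj v w (Suc m)"
    then obtain p where p: "z = p (Suc m)" "p 0 = v" "nbw adj p (Suc m)" "p 1 \<noteq> w" unfolding Dset_def by auto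
    have "adj v (p 1)" using p unfolding nbw_def by auto
    moreover have "z \<in> Dset adj (p 1) v m"
      unfolding Dset_def
    proof (intro CollectI exI[of _ "\<lambda>i. p (Suc i)"] conjI impI)
      show "z = p (Suc m)" by fact
      show "p (Suc 0) = p 1" by simp
      show "nbw adj (\<lambda>i. p (Suc i)) m" using nbw_shift[OF p(3), of 1 m] by simp
      assume "0 < m"
      then have "p (0 + 2) \<noteq> p 0" using p(3) unfolding nbw_def by auto
      then show "p (Suc 1) \<noteq> v" using p(2) by (simp add: numeral_2_eq_2)
    qed
    ultimately show "z \<in> (\<Union>c\<in>?N. Dset adj c v m)" using p(4) by blast
  qed
  have fN: "finite ?N" using deg by simp
  have cN: "card ?N = q" using deg[of v] Suc.prems by simp
  have IH: "c \<in> ?N \<Longrightarrow> finite (Dset adj c v m) \<and> card (Dset adj c v m) \<le> q ^ m" for c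
    using Suc.IH sym by blast
  have fin: "finite (\<Union>c\<in>?N. Dset adj c v m)" using fN IH by blast
  have "card (\<Union>c\<in>?N. Dset adj c v m) \<le> (\<Sum>c\<in>?N. card (Dset adj c v m))" by (rule card_UN_le[OF fN])
  also have "\<dots> \<le> (\<Sum>c\<in>?N. q ^ m)" by (rule sum_mono) (use IH in blast)
  also have "\<dots> = q ^ Suc m" using cN by simp
  finally have "card (\<Union>c\<in>?N. Dset adj c v m) \<le> q ^ Suc m" .
  moreover have "card (Dset adj v w (Suc m)) \<le> card (\<Union>c\<in>?N. Dset adj c v m)" by (rule card_mono[OF fin sub])
  ultimately show ?case using finite_subset[OF sub fin] by linarith
qed

end


locale setting = rtree +
  fixes o0 :: 'v and \<omega>m \<omega>p :: "(nat \<Rightarrow> 'v) set"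
  assumes bm: "\<omega>m \<in> boundary adj" and bp: "\<omega>p \<in> boundary adj"
    and inter: "range (ray_from o0 \<omega>m) \<inter> range (ray_from o0 \<omega>p) = {o0}"
begin

abbreviation "rp \<equiv> ray_from o0 \<omega>p"
abbreviation "rm \<equiv> ray_from o0 \<omega>m"
abbreviation "Kf x \<equiv> (LEAST k. ray_from x \<omega>p k \<in> range rp)"

lemma rp: "rp \<in> \<omega>p" "rp 0 = o0" "is_ray adj rp"
  using ray_from_prop[OF bp] class_ray[OF bp] by blast+
lemma rm: "rm \<in> \<omega>m" "rm 0 = o0" "is_ray adj rm"
  using ray_from_prop[OF bm] class_ray[OF bm] by blast+

lemma rp1_ne: "rp 1 \<noteq> rm 1"
proof
  assume "rp 1 = rm 1"
  then have "rp 1 = o0" using inter by blast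
  then show False using ray_inj[OF rp(3), of 1 0] rp(2) by simp
qed

lemma struct:
  obtains j where "\<forall>i. ray_from x \<omega>p (Kf x + i) = rp (j + i)"
    "\<forall>k<Kf x. ray_from x \<omega>p k \<notin> range rp"
    "busemann adj o0 x \<omega>p = int j - int (Kf x)"
proof -
  let ?r = "ray_from x \<omega>p"
  have r: "?r \<in> \<omega>p" "?r 0 = x" "is_ray adj ?r" using ray_from_prop[OF bp] class_ray[OF bp] by blast+
  obtain k m where km: "\<forall>n. rp (n + k) = ?r (n + m)" using class_iff[OF bp rp(1)] r(1) unfolding eqv_def by blast
  have ex: "\<exists>k. ?r k \<in> range rp" using km[rule_format, of 0] by (metis rangeI)
  have "?r (Kf x) \<in> range rp" by (rule LeastI_ex[OF ex])
  then obtain j where j: "?r (Kf x) = rp j" by blast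
  have "(\<lambda>i. ?r (i + Kf x)) = (\<lambda>i. rp (i + j))"
    by (rule class_unique[OF bp shift_in[OF bp r(1)] shift_in[OF bp rp(1)]]) (simp add: j)
  then have 1: "\<forall>i. ?r (Kf x + i) = rp (j + i)" by (metis add.commute)
  have 2: "\<forall>k<Kf x. ?r k \<notin> range rp" using not_less_Least by blast
  have "busemann adj o0 x \<omega>p = int (gdist adj o0 (rp j)) - int (gdist adj x (?r (Kf x)))"
    unfolding busemann_def Let_def j by simp
  also have "gdist adj o0 (rp j) = j" using ray_dist[OF rp(3), of 0 j] rp(2) by simp
  also have "gdist adj x (?r (Kf x)) = Kf x" using ray_dist[OF r(3), of 0 "Kf x"] r(2) by simp
  finally show ?thesis using that 1 2 by blast
qed


lemma horo_j: assumes "x \<in> horosphere adj o0 \<omega>p"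
  shows "\<forall>i. ray_from x \<omega>p (Kf x + i) = rp (Kf x + i)" "\<forall>k<Kf x. ray_from x \<omega>p k \<notin> range rp"
proof -
  obtain j where j: "\<forall>i. ray_from x \<omega>p (Kf x + i) = rp (j + i)"
    "\<forall>k<Kf x. ray_from x \<omega>p k \<notin> range rp" "busemann adj o0 x \<omega>p = int j - int (Kf x)"
    by (rule struct)
  have "busemann adj o0 x \<omega>p = 0" using assms unfolding horosphere_def by simp
  then have jK: "j = Kf x" using j(3) by simp
  show "\<forall>i. ray_from x \<omega>p (Kf x + i) = rp (Kf x + i)" using j(1) unfolding jK .
  show "\<forall>k<Kf x. ray_from x \<omega>p k \<notin> range rp" by (rule j(2))
qed

definition "Wx x = (\<lambda>i. if i < Kf x then ray_from x \<omega>p i else rp (Kf x - (i - Kf x)))"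

lemma horo_walk: assumes "x \<in> horosphere adj o0 \<omega>p"
  shows "nbw adj (Wx x) (Kf x + Kf x)" "Wx x 0 = x" "Wx x (Kf x + Kf x) = o0"
    "0 < Kf x \<Longrightarrow> Wx x (Kf x + Kf x - 1) = rp 1"
proof -
  let ?r = "ray_from x \<omega>p" and ?K = "Kf x"
  have r: "?r 0 = x" "is_ray adj ?r" using ray_from_prop[OF bp] class_ray[OF bp] by blast+
  note hj = horo_j[OF assms]
  have "nbw adj (\<lambda>i. if i < ?K then ?r i else (\<lambda>i. rp (?K - i)) (i - ?K)) (?K + ?K)"
  proof (rule nbw_join)
    show "nbw adj ?r ?K" by (rule ray_nbw0[OF r(2)])
    show "nbw adj (\<lambda>i. rp (?K - i)) ?K" by (rule nbw_rev[OF ray_nbw0[OF rp(3)] sym])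
    show "?r ?K = rp (?K - 0)" using hj(1)[rule_format, of 0] by simp
    show "0 < ?K \<and> 0 < ?K \<longrightarrow> ?r (?K - 1) \<noteq> rp (?K - 1)"
    proof
      assume "0 < ?K \<and> 0 < ?K"
      then have "?K - 1 < ?K" by simp
      then have "?r (?K - 1) \<notin> range rp" using hj(2) by blast
      then show "?r (?K - 1) \<noteq> rp (?K - 1)" by blast
    qed
  qed
  moreover have "Wx x = (\<lambda>i. if i < ?K then ?r i else (\<lambda>i. rp (?K - i)) (i - ?K))"
    unfolding Wx_def by (rule ext) simp
  ultimately show "nbw adj (Wx x) (Kf x + Kf x)" by simp
  show "Wx x 0 = x"
  proof (cases "?K = 0")
    case True
    have "?r (?K + 0) = rp (?K + 0)" using hj(1) by blast
    then have "x = o0" using True r(1) rp(2) by simp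
    then show ?thesis using True rp(2) unfolding Wx_def by simp
  next
    case False then show ?thesis using r(1) unfolding Wx_def by simp
  qed
  show "Wx x (Kf x + Kf x) = o0" using rp(2) unfolding Wx_def by simp
  assume "0 < Kf x"
  then have "\<not> (Kf x + Kf x - 1 < Kf x)" "Kf x - (Kf x + Kf x - 1 - Kf x) = 1" by auto
  then show "Wx x (Kf x + Kf x - 1) = rp 1" unfolding Wx_def by simp
qed
lemma horo_dist: assumes "x \<in> horosphere adj o0 \<omega>p" shows "gdist adj x o0 = 2 * Kf x"
proof -
  have "gdist adj (Wx x 0) (Wx x (Kf x + Kf x)) = Kf x + Kf x" by (rule nbw_gdist[OF horo_walk(1)[OF assms]])
  then show ?thesis unfolding horo_walk(2,3)[OF assms] by simp
qed

lemma gdist_self: "gdist adj x x = 0"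
proof -
  have "walk adj 0 x x" unfolding walk_def by (rule exI[of _ "\<lambda>_. x"]) simp
  then show ?thesis using gdist_le by fastforce
qed

lemma horo_bm: assumes "x \<in> horosphere adj o0 \<omega>p"
  shows "busemann adj o0 x \<omega>m = - int (gdist adj x o0)"
proof -
  let ?K = "Kf x" and ?W = "Wx x"
  note W = horo_walk[OF assms]
  define R where "R = (\<lambda>i. if i < ?K + ?K then ?W i else rm (i - (?K + ?K)))"
  have nbR: "nbw adj R n" if "?K + ?K \<le> n" for n
  proof -
    have "nbw adj R (?K + ?K + (n - (?K + ?K)))" unfolding R_def
      by (rule nbw_join[OF W(1) ray_nbw0[OF rm(3)]]) (use W(3,4) rm(2) rp1_ne in auto)
    then show ?thesis using that by simp
  qed
  have rayR: "is_ray adj R" unfolding is_ray_iff using nbR nbw_mono by (meson nat_le_linear)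
  have "eqv rm R" unfolding eqv_def by (rule exI[of _ 0], rule exI[of _ "?K + ?K"]) (simp add: R_def)
  then have RinM: "R \<in> \<omega>m" using class_iff[OF bm rm(1)] rayR by blast
  have R0: "R 0 = x" using W(2) W(3) rm(2) unfolding R_def by auto
  have rf: "ray_from x \<omega>m = R" by (rule ray_from_eq[OF bm RinM R0])
  have R2K: "R (?K + ?K) = o0" using rm(2) unfolding R_def by simp
  have notin: "R k \<notin> range rm" if k: "k < ?K + ?K" for k
  proof
    assume "R k \<in> range rm"
    then obtain j where j: "R k = rm j" by blast
    have n1: "nbw adj (\<lambda>i. R (i + k)) (?K + ?K - k)" using nbw_shift[OF nbR[OF order_refl], of k "?K + ?K - k"] k by simp
    have n2: "nbw adj (\<lambda>i. rm (j - i)) j" by (rule nbw_rev[OF ray_nbw0[OF rm(3)] sym])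
    have e: "R (?K + ?K - k + k) = rm (j - j)" using k R2K rm(2) by simp
    have u: "?K + ?K - k = j \<and> (\<forall>i\<le>?K + ?K - k. R (i + k) = rm (j - i))"
      using nbw_unique[OF n1 n2] j e by simp
    then have jj: "j = ?K + ?K - k" "0 < j" using k by auto
    have a: "R ((j - 1) + k) = rm (j - (j - 1))" by (rule u[THEN conjunct2, rule_format]) (use jj in linarith)
    have b: "(j - 1) + k = ?K + ?K - 1" "j - (j - 1) = 1" using jj k by auto
    have "R (?K + ?K - 1) = rm 1" using a unfolding b .
    moreover have "R (?K + ?K - 1) = rp 1" using W(4) k unfolding R_def by auto
    ultimately show False using rp1_ne by simp
  qed
  have L: "(LEAST k. R k \<in> range rm) = ?K + ?K"
  proof (rule Least_equality)
    show "R (?K + ?K) \<in> range rm" using R2K rm(2) by (metis rangeI)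
    show "\<And>y. R y \<in> range rm \<Longrightarrow> ?K + ?K \<le> y" using notin by (meson not_le)
  qed
  have "busemann adj o0 x \<omega>m = int (gdist adj o0 o0) - int (gdist adj x o0)"
    unfolding busemann_def Let_def rf L R2K by simp
  then show ?thesis using gdist_self by simp
qed


lemma horo_D: assumes "x \<in> horosphere adj o0 \<omega>p" "Kf x \<le> n"
  shows "x \<in> Dset adj (rp n) (rp (Suc n)) n"
proof -
  let ?r = "ray_from x \<omega>p"
  obtain K where K: "K = Kf x" by blast
  have r: "?r 0 = x" "is_ray adj ?r" using ray_from_prop[OF bp] class_ray[OF bp] by blast+
  have hj1: "?r (K + i) = rp (K + i)" for i using horo_j(1)[OF assms(1)] K by blast
  have hj2: "k < K \<Longrightarrow> ?r k \<notin> range rp" for k using horo_j(2)[OF assms(1)] K by blast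
  have Kn: "K \<le> n" using assms(2) K by simp
  define J where "J = (\<lambda>i. if i < n - K then rp (n - i) else (\<lambda>i. ?r (K - i)) (i - (n - K)))"
  have nbJ: "nbw adj J (n - K + K)" unfolding J_def
  proof (rule nbw_join)
    have "nbw adj (\<lambda>i. rp (n - i)) n" by (rule nbw_rev[OF ray_nbw0[OF rp(3)] sym])
    then show "nbw adj (\<lambda>i. rp (n - i)) (n - K)" using nbw_mono diff_le_self by blast
    show "nbw adj (\<lambda>i. ?r (K - i)) K" by (rule nbw_rev[OF ray_nbw0[OF r(2)] sym])
    show "rp (n - (n - K)) = ?r (K - 0)" using hj1[of 0] Kn by simp
    show "0 < n - K \<and> 0 < K \<longrightarrow> rp (n - (n - K - 1)) \<noteq> ?r (K - 1)"
    proof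
      assume "0 < n - K \<and> 0 < K"
      then have "?r (K - 1) \<notin> range rp" using hj2 by simp
      then show "rp (n - (n - K - 1)) \<noteq> ?r (K - 1)" by (metis rangeI)
    qed
  qed
  have "\<not> n < n - K" "K - (n - (n - K)) = 0" using Kn by auto
  then have Jn: "J n = x" using r(1) unfolding J_def by simp
  have J0: "J 0 = rp n"
  proof (cases "0 < n - K")
    case True then show ?thesis unfolding J_def by simp
  next
    case False
    then have "K = n" using Kn by simp
    then show ?thesis using hj1[of 0] False unfolding J_def by simp
  qed
  have J1: "J 1 \<noteq> rp (Suc n)" if "0 < n"
  proof -
    consider "1 < n - K" | "n - K = 1" | "n - K = 0" by linarith
    then show ?thesis
    proof cases
      case 1
      then have "J 1 = rp (n - 1)" unfolding J_def by simp
      then show ?thesis using ray_inj[OF rp(3), of "n - 1" "Suc n"] by auto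
    next
      case 2
      then have "J 1 = ?r K" unfolding J_def by simp
      also have "\<dots> = rp K" using hj1[of 0] by simp
      finally show ?thesis using ray_inj[OF rp(3), of K "Suc n"] Kn by auto
    next
      case 3
      then have "K = n" using Kn by simp
      then have "J 1 = ?r (K - 1)" using 3 unfolding J_def by simp
      moreover have "?r (K - 1) \<notin> range rp" using hj2 \<open>K = n\<close> that by simp
      ultimately show ?thesis by auto
    qed
  qed
  show ?thesis unfolding Dset_def
    using Jn J0 J1 nbJ Kn by (intro CollectI exI[of _ J]) simp
qed

lemma C_card: "finite {x \<in> horosphere adj o0 \<omega>p. gdist adj x o0 \<le> 2 * n}
   \<and> card {x \<in> horosphere adj o0 \<omega>p. gdist adj x o0 \<le> 2 * n} \<le> q ^ n"
proof -
  have sub: "{x \<in> horosphere adj o0 \<omega>p. gdist adj x o0 \<le> 2 * n} \<subseteq> Dset adj (rp n) (rp (Suc n)) n"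
  proof
    fix x assume x: "x \<in> {x \<in> horosphere adj o0 \<omega>p. gdist adj x o0 \<le> 2 * n}"
    then have h: "x \<in> horosphere adj o0 \<omega>p" by blast
    have "gdist adj x o0 \<le> 2 * n" using x by blast
    then have "Kf x \<le> n" unfolding horo_dist[OF h] by simp
    then show "x \<in> Dset adj (rp n) (rp (Suc n)) n" by (rule horo_D[OF h])
  qed
  have "adj (rp n) (rp (Suc n))" using rp(3) unfolding is_ray_def by blast
  then have "finite (Dset adj (rp n) (rp (Suc n)) n) \<and> card (Dset adj (rp n) (rp (Suc n)) n) \<le> q ^ n"
    by (rule D_card)
  then show ?thesis using sub card_mono[of _ "{x \<in> horosphere adj o0 \<omega>p. gdist adj x o0 \<le> 2 * n}"] finite_subset
    by (meson dual_order.trans)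
qed

lemma fix_ray: assumes "u \<in> automs adj" "bact u \<omega>p = \<omega>p" "u (rp k) = rp k"
  shows "u (rp (k + i)) = rp (k + i)"
proof -
  have "u \<circ> rp \<in> \<omega>p" using bact_in[OF rp(1), of u] assms(2) by simp
  then have "(\<lambda>i. (u \<circ> rp) (i + k)) = (\<lambda>i. rp (i + k))"
    by (intro class_unique[OF bp shift_in[OF bp \<open>u \<circ> rp \<in> \<omega>p\<close>] shift_in[OF bp rp(1)]]) (use assms(3) in simp)
  then have "(u \<circ> rp) (i + k) = rp (i + k)" by (rule fun_cong)
  then show ?thesis by (simp add: add.commute)
qed

lemma orbit: assumes "u \<in> Bgrp_n adj o0 \<omega>p n"
  shows "u o0 \<in> horosphere adj o0 \<omega>p" "Kf (u o0) \<le> n"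
proof -
  have u: "u \<in> automs adj" "bact u \<omega>p = \<omega>p" "u (rp n) = rp n"
    using assms unfolding Bgrp_n_def Bgrp_def stab_def by auto
  have "u \<circ> rp \<in> \<omega>p" using bact_in[OF rp(1), of u] u(2) by simp
  then have rf: "ray_from (u o0) \<omega>p = u \<circ> rp" using ray_from_eq[OF bp] rp(2) by simp
  obtain K where K: "K = Kf (u o0)" by blast
  have "(u \<circ> rp) n \<in> range rp" using u(3) by simp
  then have Kn: "K \<le> n" unfolding K rf by (rule Least_le)
  show "Kf (u o0) \<le> n" using Kn K by simp
  obtain j where j: "\<forall>i. ray_from (u o0) \<omega>p (Kf (u o0) + i) = rp (j + i)"
    "\<forall>k<Kf (u o0). ray_from (u o0) \<omega>p k \<notin> range rp" "busemann adj o0 (u o0) \<omega>p = int j - int (Kf (u o0))" by (rule struct)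
  have "(u \<circ> rp) (K + (n - K)) = rp (j + (n - K))" using j(1) unfolding rf K by blast
  then have "u (rp n) = rp (j + (n - K))" using Kn by simp
  then have "rp n = rp (j + (n - K))" using u(3) by simp
  then have "n = j + (n - K)" by (rule ray_inj[OF rp(3)])
  then have "j = K" using Kn by simp
  then show "u o0 \<in> horosphere adj o0 \<omega>p" unfolding horosphere_def using j(3) K by simp
qed

lemma bus_rpn: "busemann adj o0 (rp n) \<omega>p = int n"
proof -
  have rf: "ray_from (rp n) \<omega>p = (\<lambda>i. rp (i + n))"
    using ray_from_eq[OF bp shift_in[OF bp rp(1)]] by simp
  have K: "Kf (rp n) = 0" unfolding rf by (rule Least_equality) (simp add: rangeI, simp)
  obtain j where j: "\<forall>i. ray_from (rp n) \<omega>p (Kf (rp n) + i) = rp (j + i)"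
    "\<forall>k<Kf (rp n). ray_from (rp n) \<omega>p k \<notin> range rp" "busemann adj o0 (rp n) \<omega>p = int j - int (Kf (rp n))" by (rule struct)
  have "ray_from (rp n) \<omega>p (Kf (rp n) + 0) = rp (j + 0)" using j(1) by blast
  then have "rp n = rp j" unfolding K rf by simp
  then have "n = j" by (rule ray_inj[OF rp(3)])
  then show ?thesis using j(3) K by simp
qed

end


lemma bact_comp: "bact (g \<circ> u) \<omega> = bact g (bact u \<omega>)"
  unfolding bact_def by (auto simp: image_image comp_assoc)

lemma bact_id: "bact id \<omega> = \<omega>"
  unfolding bact_def by simp

lemma automs_comp: "g \<in> automs adj \<Longrightarrow> u \<in> automs adj \<Longrightarrow> g \<circ> u \<in> automs adj"
  unfolding automs_def by (auto intro: bij_comp)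

lemma automs_inv: assumes "g \<in> automs adj" shows "inv g \<in> automs adj"
proof -
  have b: "bij g" using assms unfolding automs_def by blast
  have "adj (inv g x) (inv g y) \<longleftrightarrow> adj x y" for x y
  proof -
    have e: "g (inv g z) = z" for z using b by (simp add: bij_is_surj surj_f_inv_f)
    have "adj (inv g x) (inv g y) \<longleftrightarrow> adj (g (inv g x)) (g (inv g y))" using assms unfolding automs_def by blast
    then show ?thesis unfolding e .
  qed
  then show ?thesis unfolding automs_def using bij_imp_bij_inv[OF b] by blast
qed

lemma bact_inv: assumes "g \<in> automs adj" "bact g \<omega> = \<omega>" shows "bact (inv g) \<omega> = \<omega>"
proof -
  have "inv g \<circ> g = id" using assms(1) unfolding automs_def by (simp add: bij_is_inj)
  then have "bact (inv g) (bact g \<omega>) = \<omega>" using bact_comp[of "inv g" g \<omega>] bact_id by metis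
  then show ?thesis using assms(2) by simp
qed

lemma openin_fix: "openin (Btop adj \<omega>) (Bgrp adj \<omega> \<inter> {u. u a = b})"
proof -
  let ?P = "product_topology (\<lambda>_::'a. discrete_topology (UNIV::'a set)) UNIV"
  have "continuous_map ?P (discrete_topology UNIV) (\<lambda>u. u a)"
    using continuous_map_product_projection[of a UNIV "\<lambda>_. discrete_topology UNIV"] by simp
  then have "openin ?P {u \<in> topspace ?P. u a \<in> {b}}"
    by (rule openin_continuous_map_preimage) simp
  moreover have "{u \<in> topspace ?P. u a \<in> {b}} = {u. u a = b}"
    by (simp add: topspace_product_topology PiE_UNIV_domain)
  ultimately show ?thesis unfolding Btop_def openin_subtopology by blast
qed

lemma haar_sets: assumes "normalized_haar q adj o0 \<omega> \<mu>" "openin (Btop adj \<omega>) S"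
  shows "S \<in> sets \<mu>"
proof -
  have "sets \<mu> = sets (borel_of_top (Btop adj \<omega>))" using assms unfolding normalized_haar_def by blast
  also have "\<dots> = sigma_sets (topspace (Btop adj \<omega>)) {U. openin (Btop adj \<omega>) U}"
  proof -
    have sub: "{U. openin (Btop adj \<omega>) U} \<subseteq> Pow (topspace (Btop adj \<omega>))" using openin_subset by blast
    show ?thesis unfolding borel_of_top_def by (rule sets_measure_of[OF sub])
  qed
  finally show ?thesis using sigma_sets.Basic[of S "{U. openin (Btop adj \<omega>) U}"] assms(2) by simp
qed

lemma haar_fix: "normalized_haar q adj o0 \<omega> \<mu> \<Longrightarrow> Bgrp adj \<omega> \<inter> {u. u a = b} \<in> sets \<mu>"
  by (rule haar_sets[OF _ openin_fix])

lemma haar_fix2: "normalized_haar q adj o0 \<omega> \<mu> \<Longrightarrow> Bgrp adj \<omega> \<inter> {u. u a = b} \<inter> {u. u c = d} \<in> sets \<mu>"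
proof -
  assume h: "normalized_haar q adj o0 \<omega> \<mu>"
  have "openin (Btop adj \<omega>) ((Bgrp adj \<omega> \<inter> {u. u a = b}) \<inter> (Bgrp adj \<omega> \<inter> {u. u c = d}))"
    by (rule openin_Int[OF openin_fix openin_fix])
  moreover have "(Bgrp adj \<omega> \<inter> {u. u a = b}) \<inter> (Bgrp adj \<omega> \<inter> {u. u c = d}) = Bgrp adj \<omega> \<inter> {u. u a = b} \<inter> {u. u c = d}"
    by blast
  ultimately show ?thesis using haar_sets[OF h] by metis
qed

lemma Bgrp_stab: "Bgrp adj \<omega> \<inter> stab adj x = Bgrp adj \<omega> \<inter> {u. u x = x}"
  unfolding Bgrp_def stab_def by blast


context setting begin

lemma stab_o0_fix: assumes "v \<in> Bgrp adj \<omega>p" "v o0 = o0" shows "v (rp n) = rp n"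
proof -
  have "v \<in> automs adj" "bact v \<omega>p = \<omega>p" using assms unfolding Bgrp_def by auto
  then have "v (rp (0 + n)) = rp (0 + n)" using fix_ray[of v 0 n] assms(2) rp(2) by simp
  then show ?thesis by simp
qed

lemma coset: assumes u0: "u0 \<in> Bgrp_n adj o0 \<omega>p n"
  shows "{u \<in> Bgrp_n adj o0 \<omega>p n. u o0 = u0 o0} = (\<lambda>v. u0 \<circ> v) ` (Bgrp adj \<omega>p \<inter> stab adj o0)"
proof
  have u0a: "u0 \<in> automs adj" "bact u0 \<omega>p = \<omega>p" "u0 (rp n) = rp n"
    using u0 unfolding Bgrp_n_def Bgrp_def stab_def by auto
  have bij0: "bij u0" using u0a(1) unfolding automs_def by blast
  show "{u \<in> Bgrp_n adj o0 \<omega>p n. u o0 = u0 o0} \<subseteq> (\<lambda>v. u0 \<circ> v) ` (Bgrp adj \<omega>p \<inter> stab adj o0)"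
  proof
    fix w assume w: "w \<in> {u \<in> Bgrp_n adj o0 \<omega>p n. u o0 = u0 o0}"
    then have wa: "w \<in> automs adj" "bact w \<omega>p = \<omega>p" "w o0 = u0 o0"
      unfolding Bgrp_n_def Bgrp_def stab_def by auto
    define v where "v = inv u0 \<circ> w"
    have "u0 \<circ> v = w" unfolding v_def using bij0
      by (auto simp: bij_is_surj surj_f_inv_f)
    moreover have "v \<in> automs adj" unfolding v_def by (rule automs_comp[OF automs_inv[OF u0a(1)] wa(1)])
    moreover have "bact v \<omega>p = \<omega>p" unfolding v_def bact_comp wa(2) by (rule bact_inv[OF u0a(1,2)])
    moreover have "v o0 = o0" unfolding v_def using wa(3) bij0 by (simp add: bij_is_inj)
    ultimately show "w \<in> (\<lambda>v. u0 \<circ> v) ` (Bgrp adj \<omega>p \<inter> stab adj o0)"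
      unfolding Bgrp_def stab_def by blast
  qed
  show "(\<lambda>v. u0 \<circ> v) ` (Bgrp adj \<omega>p \<inter> stab adj o0) \<subseteq> {u \<in> Bgrp_n adj o0 \<omega>p n. u o0 = u0 o0}"
  proof
    fix w assume "w \<in> (\<lambda>v. u0 \<circ> v) ` (Bgrp adj \<omega>p \<inter> stab adj o0)"
    then obtain v where v: "v \<in> Bgrp adj \<omega>p" "v o0 = o0" "w = u0 \<circ> v" unfolding stab_def by blast
    have va: "v \<in> automs adj" "bact v \<omega>p = \<omega>p" using v unfolding Bgrp_def by auto
    have vn: "v (rp n) = rp n" by (rule stab_o0_fix[OF v(1,2)])
    have "w \<in> automs adj" unfolding v(3) by (rule automs_comp[OF u0a(1) va(1)])
    moreover have "bact w \<omega>p = \<omega>p" unfolding v(3) bact_comp va(2) u0a(2) ..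
    moreover have "w (rp n) = rp n" using vn u0a(3) v(3) by simp
    moreover have "w o0 = u0 o0" using v by simp
    ultimately show "w \<in> {u \<in> Bgrp_n adj o0 \<omega>p n. u o0 = u0 o0}"
      unfolding Bgrp_n_def Bgrp_def stab_def by blast
  qed
qed

lemma S_eq: "{u \<in> Bgrp_n adj o0 \<omega>p n. u o0 = x} = Bgrp adj \<omega>p \<inter> {u. u (rp n) = rp n} \<inter> {u. u o0 = x}"
  unfolding Bgrp_n_def Bgrp_def stab_def by blast


lemma S_meas: assumes h: "normalized_haar q adj o0 \<omega>p \<mu>" and q: "0 < q"
  shows "emeasure \<mu> {u \<in> Bgrp_n adj o0 \<omega>p n. u o0 = x} = (if {u \<in> Bgrp_n adj o0 \<omega>p n. u o0 = x} = {} then 0 else 1)"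
proof (cases "{u \<in> Bgrp_n adj o0 \<omega>p n. u o0 = x} = {}")
  case True then show ?thesis unfolding True by simp
next
  case False
  then obtain u0 where u0: "u0 \<in> Bgrp_n adj o0 \<omega>p n" "u0 o0 = x" by blast
  have eq: "{u \<in> Bgrp_n adj o0 \<omega>p n. u o0 = x} = (\<lambda>v. u0 \<circ> v) ` (Bgrp adj \<omega>p \<inter> stab adj o0)"
    using coset[OF u0(1)] u0(2) by simp
  have Hs: "Bgrp adj \<omega>p \<inter> stab adj o0 \<in> sets \<mu>" unfolding Bgrp_stab by (rule haar_fix[OF h])
  have u0B: "u0 \<in> Bgrp adj \<omega>p" using u0 unfolding Bgrp_n_def by blast
  have b0: "busemann adj o0 o0 \<omega>p = 0" using bus_rpn[of 0] rp(2) by simp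
  have m1: "emeasure \<mu> ((\<lambda>v. u0 \<circ> v) ` (Bgrp adj \<omega>p \<inter> stab adj o0)) = emeasure \<mu> (Bgrp adj \<omega>p \<inter> stab adj o0)"
    using h u0B Hs unfolding normalized_haar_def by blast
  have m2: "emeasure \<mu> (Bgrp adj \<omega>p \<inter> stab adj o0) = ennreal (real q powr real_of_int (busemann adj o0 o0 \<omega>p))"
    using h unfolding normalized_haar_def by blast
  have m: "emeasure \<mu> ((\<lambda>v. u0 \<circ> v) ` (Bgrp adj \<omega>p \<inter> stab adj o0)) = 1" unfolding m1 m2 b0 using q by simp
  have "emeasure \<mu> {u \<in> Bgrp_n adj o0 \<omega>p n. u o0 = x} = 1" by (subst eq) (rule m)
  then show ?thesis using False by simp
qed

abbreviation "Cn n \<equiv> {x \<in> horosphere adj o0 \<omega>p. gdist adj x o0 \<le> 2 * n}"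

lemma orbit_C: "u \<in> Bgrp_n adj o0 \<omega>p n \<Longrightarrow> u o0 \<in> Cn n"
  using orbit[of u n] horo_dist[of "u o0"] by simp

lemma all_hit: assumes h: "normalized_haar q adj o0 \<omega>p \<mu>" and q: "0 < q" and x: "x \<in> Cn n"
  shows "{u \<in> Bgrp_n adj o0 \<omega>p n. u o0 = x} \<noteq> {}"
proof -
  let ?S = "\<lambda>y. {u \<in> Bgrp_n adj o0 \<omega>p n. u o0 = y}"
  have finC: "finite (Cn n)" and cardC: "card (Cn n) \<le> q ^ n" using C_card[of n] by blast+
  have U: "Bgrp_n adj o0 \<omega>p n = (\<Union>y\<in>Cn n. ?S y)" using orbit_C by blast
  have sets: "?S ` Cn n \<subseteq> sets \<mu>" unfolding S_eq using haar_fix2[OF h] by blast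
  have disj: "disjoint_family_on ?S (Cn n)" unfolding disjoint_family_on_def by blast
  have "(\<Sum>y\<in>Cn n. emeasure \<mu> (?S y)) = emeasure \<mu> (\<Union>y\<in>Cn n. ?S y)"
    by (rule sum_emeasure[OF sets disj finC])
  also have "\<dots> = emeasure \<mu> (Bgrp_n adj o0 \<omega>p n)" using U by simp
  also have "\<dots> = ennreal (real q powr real_of_int (busemann adj o0 (rp n) \<omega>p))"
    using h unfolding normalized_haar_def Bgrp_n_def by blast
  also have "\<dots> = of_nat (q ^ n)" using q by (simp add: bus_rpn powr_realpow ennreal_of_nat_eq_real_of_nat)
  finally have e1: "(\<Sum>y\<in>Cn n. emeasure \<mu> (?S y)) = of_nat (q ^ n)" .
  have "(\<Sum>y\<in>Cn n. emeasure \<mu> (?S y)) = (\<Sum>y\<in>Cn n. if ?S y \<noteq> {} then 1 else 0)"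
    using S_meas[OF h q] by (intro sum.cong) auto
  also have "\<dots> = (\<Sum>y\<in>{y\<in>Cn n. ?S y \<noteq> {}}. (1::ennreal))" by (rule sum.inter_filter[OF finC, symmetric])
  also have "\<dots> = of_nat (card {y\<in>Cn n. ?S y \<noteq> {}})" by (simp only: sum_constant mult_1_right)
  finally have "card {y\<in>Cn n. ?S y \<noteq> {}} = q ^ n" using e1 by simp
  then have "card {y\<in>Cn n. ?S y \<noteq> {}} = card (Cn n)" using cardC card_mono[OF finC, of "{y\<in>Cn n. ?S y \<noteq> {}}"] by auto
  then have "{y\<in>Cn n. ?S y \<noteq> {}} = Cn n" by (intro card_subset_eq[OF finC]) auto
  then show ?thesis using x by blast
qed

end


lemma gdist_zero: assumes "regular_tree q adj" "gdist adj x y = 0" shows "x = y"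
proof -
  interpret rtree q adj by (rule rtree.intro[OF assms(1)])
  show ?thesis using walk_gdist[of x y] assms(2) unfolding walk_def by auto
qed

theorem lemma5p5:
  fixes q :: nat and adj :: "'v \<Rightarrow> 'v \<Rightarrow> bool" and o0 :: 'v
    and \<omega>m \<omega>p :: "(nat \<Rightarrow> 'v) set" and \<mu> :: "('v \<Rightarrow> 'v) measure"
    and s' :: complex and f :: "'v \<times> (nat \<Rightarrow> 'v) set \<Rightarrow> complex"
  assumes "2 \<le> q"
    and "regular_tree q adj"
    and "\<omega>m \<in> boundary adj" and "\<omega>p \<in> boundary adj" and "\<omega>m \<noteq> \<omega>p"
    and "range (ray_from o0 \<omega>m) \<inter> range (ray_from o0 \<omega>p) = {o0}"
    and "normalized_haar q adj o0 \<omega>p \<mu>"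
    and "lc_cc adj o0 f"
  shows "(\<forall>n. \<forall>g \<in> automs adj.
            I_op q adj o0 \<omega>m \<omega>p \<mu> s' n f g =
            (\<Sum>x \<in> {x \<in> horosphere adj o0 \<omega>p. gdist adj x o0 \<le> 2 * n}.
               f (g x, bact g \<omega>p) *
               of_nat q powr (- of_nat (gdist adj x o0) * (1/2 - \<i> * cnj s'))))
       \<and> (\<forall>g \<in> automs adj. I_op q adj o0 \<omega>m \<omega>p \<mu> s' 0 f g = f (g o0, bact g \<omega>p))"
proof -
  interpret setting q adj o0 \<omega>m \<omega>p
    by (intro setting.intro rtree.intro setting_axioms.intro) (rule assms)+
  have q: "0 < q" using assms(1) by simp
  have h: "normalized_haar q adj o0 \<omega>p \<mu>" by (rule assms(7))
  let ?c = "1/2 - \<i> * cnj s'"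
  have main: "I_op q adj o0 \<omega>m \<omega>p \<mu> s' n f g =
            (\<Sum>x \<in> Cn n. f (g x, bact g \<omega>p) * of_nat q powr (- of_nat (gdist adj x o0) * ?c))"
    if g: "g \<in> automs adj" for n g
  proof -
    let ?A = "Bgrp_n adj o0 \<omega>p n"
    let ?S = "\<lambda>y. {u \<in> ?A. u o0 = y}"
    define F where "F y = f (g y, bact g \<omega>p) * of_nat q powr (of_int (busemann adj o0 y \<omega>m) * ?c)" for y
    define hh where "hh u = f ((g \<circ> u) o0, bact (g \<circ> u) \<omega>p) * of_nat q powr (of_int (busemann adj o0 (u o0) \<omega>m) * ?c)" for u
    have finC: "finite (Cn n)" using C_card[of n] by blast
    have I: "I_op q adj o0 \<omega>m \<omega>p \<mu> s' n f g = integral\<^sup>L \<mu> (\<lambda>u. indicator ?A u *\<^sub>R hh u)"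
      unfolding I_op_def set_lebesgue_integral_def hh_def by simp
    have pt: "indicator ?A u *\<^sub>R hh u = (\<Sum>y\<in>Cn n. indicator (?S y) u *\<^sub>R F y)" for u
    proof (cases "u \<in> ?A")
      case True
      have uB: "bact u \<omega>p = \<omega>p" using True unfolding Bgrp_n_def Bgrp_def by blast
      have "hh u = F (u o0)" unfolding hh_def F_def bact_comp uB by simp
      moreover have "indicator (?S y) u = (if y = u o0 then 1 else (0::real))" for y
        using True by (auto simp: indicator_def)
      moreover have "u o0 \<in> Cn n" using orbit_C[OF True] .
      ultimately show ?thesis using True finC by (simp add: if_distrib[of "\<lambda>t. t *\<^sub>R _"] cong: if_cong)
    next
      case False
      then show ?thesis by (simp add: indicator_def)
    qed
    have Sset: "?S y \<in> sets \<mu>" for y unfolding S_eq by (rule haar_fix2[OF h])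
    have Sfin: "emeasure \<mu> (?S y) < \<infinity>" for y using S_meas[OF h q, of n y] by simp
    have Sm: "measure \<mu> (?S y) = 1" if "y \<in> Cn n" for y
      using S_meas[OF h q, of n y] all_hit[OF h q that] unfolding measure_def by simp
    have sp: "?S y \<inter> space \<mu> = ?S y" for y using h unfolding normalized_haar_def Bgrp_n_def by blast
    have "integral\<^sup>L \<mu> (\<lambda>u. indicator ?A u *\<^sub>R hh u) = integral\<^sup>L \<mu> (\<lambda>u. \<Sum>y\<in>Cn n. indicator (?S y) u *\<^sub>R F y)"
      using pt by simp
    also have "\<dots> = (\<Sum>y\<in>Cn n. integral\<^sup>L \<mu> (\<lambda>u. indicator (?S y) u *\<^sub>R F y))"
      by (rule Bochner_Integration.integral_sum) (use Sset Sfin in auto)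
    also have "\<dots> = (\<Sum>y\<in>Cn n. F y)"
    proof (rule sum.cong[OF refl])
      fix y assume y: "y \<in> Cn n"
      have "integral\<^sup>L \<mu> (\<lambda>u. indicator (?S y) u *\<^sub>R F y) = integral\<^sup>L \<mu> (indicator (?S y)) *\<^sub>R F y"
        by (rule integral_scaleR_left) (use Sset Sfin in auto)
      also have "\<dots> = F y" using Sm[OF y] sp[of y] by simp
      finally show "integral\<^sup>L \<mu> (\<lambda>u. indicator (?S y) u *\<^sub>R F y) = F y" .
    qed
    also have "\<dots> = (\<Sum>x \<in> Cn n. f (g x, bact g \<omega>p) * of_nat q powr (- of_nat (gdist adj x o0) * ?c))"
    proof (rule sum.cong[OF refl])
      fix y assume y: "y \<in> Cn n"
      then have "busemann adj o0 y \<omega>m = - int (gdist adj y o0)" using horo_bm by blast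
      then show "F y = f (g y, bact g \<omega>p) * of_nat q powr (- of_nat (gdist adj y o0) * ?c)"
        unfolding F_def by simp
    qed
    finally show ?thesis using I by simp
  qed
  have C0: "Cn 0 = {o0}"
  proof
    show "Cn 0 \<subseteq> {o0}" using gdist_zero[OF assms(2)] by auto
    have "busemann adj o0 o0 \<omega>p = 0" using bus_rpn[of 0] rp(2) by simp
    then show "{o0} \<subseteq> Cn 0" unfolding horosphere_def using gdist_self by simp
  qed
  show ?thesis
  proof (intro conjI allI ballI)
    fix n g assume "g \<in> automs adj"
    then show "I_op q adj o0 \<omega>m \<omega>p \<mu> s' n f g =
            (\<Sum>x \<in> {x \<in> horosphere adj o0 \<omega>p. gdist adj x o0 \<le> 2 * n}.
               f (g x, bact g \<omega>p) * of_nat q powr (- of_nat (gdist adj x o0) * ?c))"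
      by (rule main)
  next
    fix g assume "g \<in> automs adj"
    then have "I_op q adj o0 \<omega>m \<omega>p \<mu> s' 0 f g =
            (\<Sum>x \<in> Cn 0. f (g x, bact g \<omega>p) * of_nat q powr (- of_nat (gdist adj x o0) * ?c))"
      by (rule main)
    also have "\<dots> = f (g o0, bact g \<omega>p)" unfolding C0 using q gdist_self by simp
    finally show "I_op q adj o0 \<omega>m \<omega>p \<mu> s' 0 f g = f (g o0, bact g \<omega>p)" .
  qed
qed

end
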